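(* Let $T\in\mathfrak{sl}_3(\mathbb R)$, $\mathbf Q\in\mathbb R^3$, $\mathbf p\in(\mathbb R^3)^*$, and let $X^{\mathrm{roll}}$ be the vector field on $S^2\times S^3$ induced by $\rho(T,\mathbf Q,\mathbf p)$. Then $X^{\mathrm{roll}}$ descends to a vector field on $S^2\times\mathrm{SO}_3$ under the double cover $S^2\times S^3\to S^2\times\mathrm{SO}_3$, $(\mathbf v,q)\mapsto(\mathbf v,\mathbf x\mapsto q\mathbf x\bar q)$, if and only if $T^t=-T$ and $\mathbf Q=-\mathbf p$ (identifying $\mathbb R^3$ and $(\mathbb R^3)^*$ via the Euclidean inner product).
   Context: $\mathrm{Im}(\mathbb O)$ is the space of matrices $\begin{pmatrix}x&\mathbf A\\ \mathbf b&-x\end{pmatrix}$, $x\in\mathbb R$, $\mathbf A\in\mathbb R^3$ column, $\mathbf b\in(\mathbb R^3)^*$ row. Vector products: for $\mathbf A,\mathbf A'\in\mathbb R^3$, $\mathbf A\times\mathbf A'=\det(\mathbf A,\mathbf A',\cdot)\in(\mathbb R^3)^*$; for $\mathbf b,\mathbf b'\in(\mathbb R^3)^*$, $\mathbf b\times\mathbf b'=\det(\mathbf b,\mathbf b',\cdot)\in\mathbb R^3$. The linear map $\rho(T,\mathbf Q,\mathbf p)$ on $\mathrm{Im}(\mathbb O)$ is $\begin{pmatrix}x&\mathbf A\\ \mathbf b&-x\end{pmatrix}\mapsto\begin{pmatrix}\mathbf p\mathbf A+\mathbf b\mathbf Q&T\mathbf A-\mathbf p\times\mathbf b+2\mathbf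 Qx\\ \mathbf Q\times\mathbf A-\mathbf bT+2\mathbf px&-\mathbf p\mathbf A-\mathbf b\mathbf Q\end{pmatrix}$; viewed as a linear vector field, it is tangent to the null cone $C=\{-x^2+\mathbf b\mathbf A=0\}$ and commutes with scaling, so it descends to $\widetilde Q^{\mathrm{oct}}=(C\setminus0)/\mathbb R^+$. With $\mathbb R^3\cong\mathrm{Im}(\mathbb H)\cong(\mathbb R^3)^*$, the diffeomorphism $\Phi:S^2\times S^3\to\widetilde Q^{\mathrm{oct}}$ is $\Phi(\mathbf v,q)=\mathbb R^+\begin{pmatrix}\mathrm{Re}(\mathbf vq)&\mathbf v+\mathrm{Im}(\mathbf vq)\\ \mathbf v-\mathrm{Im}(\mathbf vq)&-\mathrm{Re}(\mathbf vq)\end{pmatrix}$, and $X^{\mathrm{roll}}$ is the pullback under $\Phi$ of the descended vector field. Descending means $X^{\mathrm{roll}}$ is invariant under $(\mathbf v,q)\mapsto(\mathbf v,-q)$. *)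

theory Defs
  imports "HOL-Analysis.Analysis"
begin

text \<open>Quaternions are modelled as pairs (real part, imaginary part in R^3);
  Im(H), R^3 and (R^3)^* are all identified with real^3 via the Euclidean
  inner product, so row vectors are also elements of real^3.\<close>

type_synonym quat = "real \<times> (real^3)"

definition qmult :: "quat \<Rightarrow> quat \<Rightarrow> quat" where
  "qmult q r = (fst q * fst r - snd q \<bullet> snd r,
                fst q *\<^sub>R snd r + fst r *\<^sub>R snd q + cross3 (snd q) (snd r))"

definition S2 :: "(real^3) set" where "S2 = {v. norm v = 1}"
definition S3 :: "quat set" where "S3 = {q. norm q = 1}"

text \<open>An element of Im(O), the matrix ((x, A), (b, -x)), is encoded as (x, A, b).\<close>
type_synonym imO = "real \<times> (real^3) \<times> (real^3)"

text \<open>Here p A and b Q are the pairings of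
  rows with columns, p x b = det(p,b,.) and Q x A = det(Q,A,.) are the cross
  products, and b T is the row vector times matrix product.\<close>
definition rho :: "real^3^3 \<Rightarrow> real^3 \<Rightarrow> real^3 \<Rightarrow> imO \<Rightarrow> imO" where
  "rho T Q p m = (case m of (x, A, b) \<Rightarrow>
     (p \<bullet> A + b \<bullet> Q,
      T *v A - cross3 p b + (2 * x) *\<^sub>R Q,
      cross3 Q A - b v* T + (2 * x) *\<^sub>R p))"

text \<open>The representative in the null cone of Phi(v,q) (before taking the R^+ ray).\<close>
definition Phi_rep :: "real^3 \<Rightarrow> quat \<Rightarrow> imO" where
  "Phi_rep v q = (let vq = qmult (0, v) q in (fst vq, v + snd vq, v - snd vq))"

text \<open>The pullback under Phi of the vector field induced by rho on the ray space
  (C minus 0)/R^+: the unique tangent vector (xi, eta) at (v,q) in S^2 x S^3 whose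
  image under dPhi is the class of rho(m) modulo the ray direction R m, where
  m = Phi_rep v q.\<close>
definition X_roll :: "real^3^3 \<Rightarrow> real^3 \<Rightarrow> real^3 \<Rightarrow> (real^3) \<times> quat \<Rightarrow> (real^3) \<times> quat" where
  "X_roll T Q p vq = (case vq of (v, q) \<Rightarrow>
     THE w. fst w \<bullet> v = 0 \<and> snd w \<bullet> q = 0 \<and>
       (\<exists>l::real. frechet_derivative (\<lambda>z. Phi_rep (fst z) (snd z)) (at (v, q)) w
                  = rho T Q p (Phi_rep v q) + l *\<^sub>R Phi_rep v q))"

text \<open>A vector field X on S^2 x S^3 descends to S^2 x SO(3) under the double cover
  (v,q) |-> (v, x |-> q x conj q) iff it is invariant under the deck transformation
  (v,q) |-> (v,-q), whose differential is (xi, eta) |-> (xi, -eta).\<close>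
definition descends_SO3 :: "((real^3) \<times> quat \<Rightarrow> (real^3) \<times> quat) \<Rightarrow> bool" where
  "descends_SO3 X \<longleftrightarrow> (\<forall>v \<in> S2. \<forall>q \<in> S3.
      X (v, -q) = (fst (X (v, q)), - snd (X (v, q))))"

end

theory Submission imports Defs begin

lemma bb_cross3: "bounded_bilinear cross3"
  using bilinear_cross bilinear_conv_bounded_bilinear by blast

lemma hd_fst: "(fst has_derivative fst) F"
  by (simp add: bounded_linear_fst bounded_linear_imp_has_derivative)
lemma hd_snd: "(snd has_derivative snd) F"
  by (simp add: bounded_linear_snd bounded_linear_imp_has_derivative)

definition dPhi :: "real^3 \<Rightarrow> quat \<Rightarrow> (real^3) \<times> quat \<Rightarrow> imO" where
  "dPhi v q w = (let z = qmult (0, fst w) q + qmult (0, v) (snd w) in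
     (fst z, fst w + snd z, fst w - snd z))"

lemma dPhi_deriv:
  "((\<lambda>z. Phi_rep (fst z) (snd z)) has_derivative dPhi v q) (at (v,q))"
proof -
  have eq: "(\<lambda>z. Phi_rep (fst z) (snd z)) = (\<lambda>z. (-(fst z \<bullet> snd (snd z)),
     fst z + (fst (snd z) *\<^sub>R fst z + cross3 (fst z) (snd (snd z))),
     fst z - (fst (snd z) *\<^sub>R fst z + cross3 (fst z) (snd (snd z)))))"
    by (auto simp: fun_eq_iff Phi_rep_def qmult_def)
  show ?thesis
  unfolding eq
  apply (rule has_derivative_eq_rhs)
   apply ((rule has_derivative_Pair hd_fst hd_snd has_derivative_add has_derivative_diff has_derivative_minus
     has_derivative_inner has_derivative_scaleR has_derivative_fst has_derivative_snd
     bounded_bilinear.FDERIV[OF bb_cross3] has_derivative_ident)+)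
  apply (auto simp: fun_eq_iff algebra_simps dPhi_def qmult_def)
  done
qed


lemmas cs = cross3_def inner_vec_def sum_3 vec_eq_iff forall_3 vector_3 inner_Pair prod_eq_iff qmult_def

lemma qm_vv: "qmult (0,v) (qmult (0,v) y) = -(v \<bullet> v) *\<^sub>R y"
  by (cases y) (simp add: cs algebra_simps)

lemma qm_skew: "qmult (0,v) y \<bullet> z = - (y \<bullet> qmult (0,v) z)"
  proof -
  obtain y0 yv z0 zv where q: "y = (y0,yv)" "z = (z0,zv)" by (cases y, cases z)
  show ?thesis by (simp add: q cs algebra_simps)
qed

lemma qm_norm: "qmult (0,a) q \<bullet> qmult (0,b) q = (a \<bullet> b) * (q \<bullet> q)"
  proof -
  obtain q0 qv where q: "q = (q0,qv)" by (cases q)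
  show ?thesis by (simp add: q cs algebra_simps)
qed

lemma qm_add_right: "qmult a (y + z) = qmult a y + qmult a z"
  by (simp add: qmult_def cs algebra_simps)
lemma qm_diff_right: "qmult a (y - z) = qmult a y - qmult a z"
  by (simp add: qmult_def cs algebra_simps)
lemma qm_scale_right: "qmult a (c *\<^sub>R z) = c *\<^sub>R qmult a z"
  by (simp add: qmult_def cs algebra_simps)
lemma qm_minus_right: "qmult a (- z) = - qmult a z"
  by (simp add: qmult_def cs algebra_simps)
lemma qm_add_left: "qmult (y + z) a = qmult y a + qmult z a"
  by (simp add: qmult_def cs algebra_simps)
lemma qm_minus_left: "qmult (- z) a = - qmult z a"
  by (simp add: qmult_def cs algebra_simps)

lemma dPhi_linear: "dPhi v q (w1 - w2) = dPhi v q w1 - dPhi v q w2"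
  by (simp add: dPhi_def Let_def qmult_def cs algebra_simps)


definition tgt :: "imO \<Rightarrow> imO \<Rightarrow> bool" where
  "tgt m r \<longleftrightarrow> -2 * fst m * fst r + snd (snd r) \<bullet> fst (snd m) + snd (snd m) \<bullet> fst (snd r) = 0"

lemma rho_tgt: "tgt m (rho T Q p m)"
proof -
  obtain x A b where m: "m = (x, A, b)" by (cases m) auto
  show ?thesis
    by (simp add: m tgt_def rho_def inner_add_left inner_add_right inner_diff_left
        inner_diff_right dot_lmul_matrix dot_cross_self inner_commute[of A] algebra_simps)
qed

lemma inj0:
  assumes v: "v \<bullet> v = 1" and t: "fst w \<bullet> v = 0" and e: "dPhi v q w = l *\<^sub>R Phi_rep v q"
  shows "w = 0"
proof -
  obtain \<xi> \<eta> where w: "w = (\<xi>, \<eta>)" by (cases w)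
  define z where "z = qmult (0, \<xi>) q + qmult (0, v) \<eta>"
  define vq where "vq = qmult (0, v) q"
  have e1: "fst z = l * fst vq" and e2: "\<xi> + snd z = l *\<^sub>R (v + snd vq)"
    and e3: "\<xi> - snd z = l *\<^sub>R (v - snd vq)"
    using e by (simp_all add: w dPhi_def Phi_rep_def z_def vq_def Let_def)
  have xi: "\<xi> = l *\<^sub>R v"
  proof -
    have "\<xi> $ i = l * v $ i" for i
    proof -
      have a: "\<xi> $ i + snd z $ i = l * v $ i + l * snd vq $ i"
        using arg_cong[OF e2, of "\<lambda>x. x $ i"] by (simp add: algebra_simps)
      have b: "\<xi> $ i - snd z $ i = l * v $ i - l * snd vq $ i"
        using arg_cong[OF e3, of "\<lambda>x. x $ i"] by (simp add: algebra_simps)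
      show ?thesis using a b by linarith
    qed
    then show ?thesis by (simp add: vec_eq_iff)
  qed
  then have "l = 0" using t v by (simp add: w)
  then have xi0: "\<xi> = 0" using xi by simp
  have "z = 0" using e1 e2 e3 \<open>l = 0\<close> xi0 by (simp add: prod_eq_iff)
  then have "qmult (0, v) \<eta> = 0" using xi0 by (simp add: z_def qmult_def prod_eq_iff)
  then have "qmult (0,v) (qmult (0, v) \<eta>) = 0" by (simp add: qmult_def prod_eq_iff)
  then have "\<eta> = 0" using qm_vv[of v \<eta>] v by simp
  then show ?thesis using xi0 w by (simp add: zero_prod_def)
qed


lemma exist:
  assumes v: "v \<bullet> v = 1" and q: "q \<bullet> q = 1" and t: "tgt (Phi_rep v q) r"
  shows "\<exists>w. fst w \<bullet> v = 0 \<and> snd w \<bullet> q = 0 \<and> (\<exists>l. dPhi v q w = r + l *\<^sub>R Phi_rep v q)"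
proof -
  obtain r0 rA rb where r: "r = (r0, rA, rb)" by (cases r) auto
  define vq where "vq = qmult (0,v) q"
  obtain x u where vqxu: "vq = (x,u)" by (cases vq)
  have m: "Phi_rep v q = (x, v + u, v - u)" by (simp add: Phi_rep_def vq_def[symmetric] vqxu)
  define l where "l = -((rA + rb) \<bullet> v) / 2"
  define \<xi> where "\<xi> = (1/2) *\<^sub>R (rA + rb) + l *\<^sub>R v"
  define s :: quat where "s = (r0, (1/2) *\<^sub>R (rA - rb))"
  define y where "y = s + l *\<^sub>R vq - qmult (0,\<xi>) q"
  define \<eta> where "\<eta> = qmult (0, -v) y"
  have mv: "(0::real, -v) = - (0, v)" by simp
  have vy: "qmult (0,v) \<eta> = y"
    unfolding \<eta>_def mv qm_minus_left qm_minus_right qm_vv v by simp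
  have xv: "\<xi> \<bullet> v = 0" by (simp add: \<xi>_def l_def inner_add_left v field_simps)
  have eq: "dPhi v q (\<xi>,\<eta>) = r + l *\<^sub>R Phi_rep v q"
  proof -
    have z: "qmult (0, \<xi>) q + qmult (0, v) \<eta> = s + l *\<^sub>R vq" by (simp add: vy y_def)
    show ?thesis unfolding dPhi_def Let_def fst_conv snd_conv z
      by (simp add: m r s_def vqxu \<xi>_def vec_eq_iff algebra_simps)
  qed
  have hq: "\<eta> \<bullet> q = 0"
  proof -
    have "\<eta> \<bullet> q = y \<bullet> vq"
      unfolding \<eta>_def mv qm_minus_left vq_def by (simp add: qm_skew)
    also have "\<dots> = s \<bullet> vq + l * (v \<bullet> v) * (q \<bullet> q) - (\<xi> \<bullet> v) * (q \<bullet> q)"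
      unfolding y_def vq_def by (simp add: inner_add_left inner_diff_left qm_norm)
    also have "\<dots> = s \<bullet> vq + l" using v q xv by simp
    also have "\<dots> = 0"
      using t unfolding tgt_def m r
      by (simp add: s_def vqxu l_def inner_Pair inner_add_left inner_add_right inner_diff_left
          inner_diff_right inner_commute[of rA] inner_commute[of rb] field_simps)
    finally show ?thesis .
  qed
  show ?thesis using xv hq eq by (intro exI[of _ "(\<xi>, \<eta>)"]) auto
qed


lemma sym_part:
  fixes T :: "real^3^3" and Q p :: "real^3"
  assumes tr: "trace T = 0"
    and K: "\<forall>A. A \<noteq> 0 \<longrightarrow> (p + Q) \<bullet> A = 0 \<and> (\<exists>c. (T + transpose T) *v A = c *\<^sub>R A)"
  shows "transpose T = -T \<and> Q = -p"
proof -
  define S where "S = T + transpose T"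
  have S: "S $ i $ j = T $ i $ j + T $ j $ i" for i j by (simp add: S_def transpose_def)
  let ?e1 = "vector [1,0,0] :: real^3"
  let ?e2 = "vector [0,1,0] :: real^3"
  let ?e3 = "vector [0,0,1] :: real^3"
  let ?e12 = "vector [1,1,0] :: real^3"
  let ?e23 = "vector [0,1,1] :: real^3"
  have nz: "?e1 \<noteq> 0" "?e2 \<noteq> 0" "?e3 \<noteq> 0" "?e12 \<noteq> 0" "?e23 \<noteq> 0"
    by (simp_all add: vec_eq_iff forall_3 vector_3)
  obtain c1 where c1: "S *v ?e1 = c1 *\<^sub>R ?e1" using K nz(1) S_def by blast
  obtain c2 where c2: "S *v ?e2 = c2 *\<^sub>R ?e2" using K nz(2) S_def by blast
  obtain c3 where c3: "S *v ?e3 = c3 *\<^sub>R ?e3" using K nz(3) S_def by blast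
  obtain c4 where c4: "S *v ?e12 = c4 *\<^sub>R ?e12" using K nz(4) S_def by blast
  obtain c5 where c5: "S *v ?e23 = c5 *\<^sub>R ?e23" using K nz(5) S_def by blast
  have pq: "(p + Q) \<bullet> ?e1 = 0" "(p + Q) \<bullet> ?e2 = 0" "(p + Q) \<bullet> ?e3 = 0"
    using K nz by blast+
  have d1: "S$1$1 = c1" "S$2$1 = 0" "S$3$1 = 0"
    using c1 by (simp_all add: vec_eq_iff forall_3 vector_3 matrix_vector_mult_def sum_3)
  have d2: "S$1$2 = 0" "S$2$2 = c2" "S$3$2 = 0"
    using c2 by (simp_all add: vec_eq_iff forall_3 vector_3 matrix_vector_mult_def sum_3)
  have d3: "S$1$3 = 0" "S$2$3 = 0" "S$3$3 = c3"
    using c3 by (simp_all add: vec_eq_iff forall_3 vector_3 matrix_vector_mult_def sum_3)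
  have d4: "S$1$1 + S$1$2 = c4" "S$2$1 + S$2$2 = c4"
    using c4 by (simp_all add: vec_eq_iff forall_3 vector_3 matrix_vector_mult_def sum_3)
  have d5: "S$2$2 + S$2$3 = c5" "S$3$2 + S$3$3 = c5"
    using c5 by (simp_all add: vec_eq_iff forall_3 vector_3 matrix_vector_mult_def sum_3)
  have trS: "T$1$1 + T$2$2 + T$3$3 = 0" using tr by (simp add: trace_def sum_3)
  have all0: "\<forall>i j. S$i$j = 0"
    unfolding forall_3 using d1 d2 d3 d4 d5 trS S[of 1 1] S[of 2 2] S[of 3 3] by auto
  then have all: "S$i$j = 0" for i j by blast
  have "transpose T = -T"
    unfolding vec_eq_iff transpose_def using all[unfolded S] by (simp add: eq_neg_iff_add_eq_0 add.commute)
  moreover have "Q = -p"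
    using pq by (simp add: vec_eq_iff forall_3 inner_vec_def sum_3 vector_3)
  ultimately show ?thesis by blast
qed


definition Pr :: "imO \<Rightarrow> real^3 \<Rightarrow> quat \<Rightarrow> (real^3) \<times> quat \<Rightarrow> bool" where
  "Pr r v q w \<longleftrightarrow> fst w \<bullet> v = 0 \<and> snd w \<bullet> q = 0 \<and> (\<exists>l. dPhi v q w = r + l *\<^sub>R Phi_rep v q)"

lemma EU:
  assumes v: "v \<bullet> v = 1" and q: "q \<bullet> q = 1" and t: "tgt (Phi_rep v q) r"
  shows "\<exists>!w. Pr r v q w"
proof (rule ex_ex1I)
  show "\<exists>w. Pr r v q w" using exist[OF v q t] unfolding Pr_def .
next
  fix w1 w2 assume a: "Pr r v q w1" "Pr r v q w2"
  then obtain l1 l2 where e1: "dPhi v q w1 = r + l1 *\<^sub>R Phi_rep v q"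
    and e2: "dPhi v q w2 = r + l2 *\<^sub>R Phi_rep v q" unfolding Pr_def by blast
  have "dPhi v q (w1 - w2) = (l1 - l2) *\<^sub>R Phi_rep v q"
    unfolding dPhi_linear e1 e2 by (simp add: algebra_simps)
  moreover have "fst (w1 - w2) \<bullet> v = 0" using a unfolding Pr_def by (simp add: inner_diff_left)
  ultimately have "w1 - w2 = 0" using inj0[OF v] by blast
  then show "w1 = w2" by simp
qed

lemma X_eq: "X_roll T Q p (v, q) = (THE w. Pr (rho T Q p (Phi_rep v q)) v q w)"
  unfolding X_roll_def Pr_def using frechet_derivative_at[OF dPhi_deriv, of v q] by simp

definition sig :: "imO \<Rightarrow> imO" where "sig m = (- fst m, snd (snd m), fst (snd m))"

lemma sig_Phi: "Phi_rep v (-q) = sig (Phi_rep v q)"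
  by (simp add: Phi_rep_def sig_def qm_minus_right Let_def)

lemma sig_dPhi: "dPhi v (-q) (a, -b) = sig (dPhi v q (a, b))"
  by (simp add: dPhi_def sig_def qm_minus_right Let_def algebra_simps)

lemma sig_rho: "rho T Q p (sig m) = sig (rho (- transpose T) (-p) (-Q) m)"
proof -
  obtain x A b where m: "m = (x, A, b)" by (cases m) auto
  show ?thesis by (simp add: m sig_def rho_def inner_commute algebra_simps
      vector_matrix_mult_def matrix_vector_mult_def transpose_def cross_skew[of p] cross_skew[of Q] vec_eq_iff sum_negf)
qed

lemma sig_lin: "sig (a + l *\<^sub>R b) = sig a + l *\<^sub>R sig b"
  by (simp add: sig_def)

lemma sig_inj: "sig a = sig b \<longleftrightarrow> a = b"
  by (auto simp: sig_def prod_eq_iff)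

lemma Pr_flip:
  "Pr (rho T Q p (Phi_rep v (-q))) v (-q) (a, -b) \<longleftrightarrow>
   Pr (rho (- transpose T) (-p) (-Q) (Phi_rep v q)) v q (a, b)"
  unfolding Pr_def sig_Phi sig_dPhi sig_rho sig_lin[symmetric] sig_inj by simp


lemma S2_dot: "v \<in> S2 \<Longrightarrow> v \<bullet> v = 1"
  by (simp add: S2_def power2_norm_eq_inner[symmetric])
lemma S3_dot: "q \<in> S3 \<Longrightarrow> q \<bullet> q = 1"
  by (simp add: S3_def power2_norm_eq_inner[symmetric])

lemma X_neg:
  assumes v: "v \<bullet> v = 1" and q: "q \<bullet> q = 1"
  shows "X_roll T Q p (v, -q) =
    (let W = (THE w. Pr (rho (- transpose T) (-p) (-Q) (Phi_rep v q)) v q w) in (fst W, - snd W))"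
proof -
  define W where "W = (THE w. Pr (rho (- transpose T) (-p) (-Q) (Phi_rep v q)) v q w)"
  have "Pr (rho (- transpose T) (-p) (-Q) (Phi_rep v q)) v q W"
    unfolding W_def by (rule theI') (rule EU[OF v q rho_tgt])
  then have PW: "Pr (rho T Q p (Phi_rep v (-q))) v (-q) (fst W, - snd W)"
    using Pr_flip[of T Q p v q "fst W" "snd W"] by simp
  have q': "(-q) \<bullet> (-q) = 1" using q by simp
  show ?thesis unfolding X_eq Let_def W_def[symmetric]
    by (rule the1_equality[OF EU[OF v q' rho_tgt] PW])
qed

lemma X_pos:
  assumes v: "v \<bullet> v = 1" and q: "q \<bullet> q = 1"
  shows "Pr (rho T Q p (Phi_rep v q)) v q (X_roll T Q p (v, q))"
  unfolding X_eq by (rule theI') (rule EU[OF v q rho_tgt])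

lemma mv_neg: "(- A) *v x = - (A *v (x::real^'n)) " for A :: "real^'n^'m"
  by (simp add: vec_eq_iff matrix_vector_mult_def sum_negf)

theorem proposition8:
  fixes T :: "real^3^3" and Q p :: "real^3"
  assumes "trace T = 0"
  shows "descends_SO3 (X_roll T Q p) \<longleftrightarrow> (transpose T = - T \<and> Q = - p)"
proof
  assume d: "descends_SO3 (X_roll T Q p)"
  have K: "\<forall>A. A \<noteq> 0 \<longrightarrow> (p + Q) \<bullet> A = 0 \<and> (\<exists>c. (T + transpose T) *v A = c *\<^sub>R A)"
  proof (intro allI impI)
    fix A :: "real^3" assume A: "A \<noteq> 0"
    define v where "v = (1 / norm A) *\<^sub>R A"
    have vS: "v \<in> S2" using A by (simp add: v_def S2_def)
    have A': "A = norm A *\<^sub>R v" using A by (simp add: v_def)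
    define q0 :: quat where "q0 = (1, 0)"
    have qS: "q0 \<in> S3" by (simp add: q0_def S3_def)
    have vv: "v \<bullet> v = 1" using S2_dot[OF vS] .
    have qq: "q0 \<bullet> q0 = 1" using S3_dot[OF qS] .
    have m: "Phi_rep v q0 = (0, v + v, 0)" by (simp add: Phi_rep_def qmult_def q0_def)
    define W where "W = (THE w. Pr (rho (- transpose T) (-p) (-Q) (Phi_rep v q0)) v q0 w)"
    have PW': "Pr (rho (- transpose T) (-p) (-Q) (Phi_rep v q0)) v q0 W"
      unfolding W_def by (rule theI') (rule EU[OF vv qq rho_tgt])
    have "X_roll T Q p (v, -q0) = (fst W, - snd W)"
      using X_neg[OF vv qq, of T Q p] by (simp add: W_def Let_def)
    moreover have "X_roll T Q p (v, -q0) = (fst (X_roll T Q p (v, q0)), - snd (X_roll T Q p (v, q0)))"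
      using d vS qS unfolding descends_SO3_def by blast
    ultimately have "W = X_roll T Q p (v, q0)" by (simp add: prod_eq_iff)
    then have PW: "Pr (rho T Q p (Phi_rep v q0)) v q0 W" using X_pos[OF vv qq] by simp
    obtain l1 l2 where e1: "dPhi v q0 W = rho (- transpose T) (-p) (-Q) (Phi_rep v q0) + l1 *\<^sub>R Phi_rep v q0"
      and e2: "dPhi v q0 W = rho T Q p (Phi_rep v q0) + l2 *\<^sub>R Phi_rep v q0"
      using PW PW' unfolding Pr_def by blast
    have eq: "rho (- transpose T) (-p) (-Q) (Phi_rep v q0) + l1 *\<^sub>R Phi_rep v q0 =
              rho T Q p (Phi_rep v q0) + l2 *\<^sub>R Phi_rep v q0" using e1 e2 by simp
    have f1: "- (Q \<bullet> (v + v)) = p \<bullet> (v + v)"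
      using arg_cong[OF eq, of fst] by (simp add: m rho_def)
    have f2: "- (transpose T *v (v + v)) + l1 *\<^sub>R (v + v) = T *v (v + v) + l2 *\<^sub>R (v + v)"
      using arg_cong[OF eq, of "\<lambda>z. fst (snd z)"] by (simp add: m rho_def mv_neg)
    have g1: "(p + Q) \<bullet> v = 0" using f1 unfolding inner_add_left inner_add_right by linarith
    have g2: "(T + transpose T) *v v = (l1 - l2) *\<^sub>R v"
    proof -
      have "((T + transpose T) *v v) $ i = ((l1 - l2) *\<^sub>R v) $ i" for i
      proof -
        have c: "- ((transpose T *v v)$i + (transpose T *v v)$i) + l1 * (v$i + v$i)
            = (T *v v)$i + (T *v v)$i + l2 * (v$i + v$i)"
          using arg_cong[OF f2, of "\<lambda>x. x$i"] unfolding matrix_vector_right_distrib by simp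
        then show ?thesis unfolding matrix_vector_mult_add_rdistrib by (simp add: algebra_simps)
      qed
      then show ?thesis by (simp add: vec_eq_iff)
    qed
    show "(p + Q) \<bullet> A = 0 \<and> (\<exists>c. (T + transpose T) *v A = c *\<^sub>R A)"
    proof
      show "(p + Q) \<bullet> A = 0" by (subst A') (simp add: g1)
      show "\<exists>c. (T + transpose T) *v A = c *\<^sub>R A"
        by (rule exI[of _ "l1 - l2"], subst (1 2) A') (simp add: matrix_vector_mult_scaleR g2)
    qed
  qed
  show "transpose T = - T \<and> Q = - p" by (rule sym_part[OF assms K])
next
  assume h: "transpose T = - T \<and> Q = - p"
  then have R: "rho (- transpose T) (-p) (-Q) = rho T Q p" by simp
  show "descends_SO3 (X_roll T Q p)"
    unfolding descends_SO3_def
  proof (intro ballI)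
    fix v q assume vS: "v \<in> S2" and qS: "q \<in> S3"
    show "X_roll T Q p (v, -q) = (fst (X_roll T Q p (v, q)), - snd (X_roll T Q p (v, q)))"
      using X_neg[OF S2_dot[OF vS] S3_dot[OF qS], of T Q p] unfolding R X_eq Let_def by simp
  qed
qed

end
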